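(* Let $l\ge 4$ be an integer, let $G_1$ be any graph (possibly a loopless multigraph), and let $G=K_1\vee (P_l\cup G_1)$. Then: (i) if $l\ge 5$, then for every $s$ with $3\le s\le l-2$, $$\sigma_1(G)<\sigma_1\big(K_1\vee(C_s\cup P_{l-s}\cup G_1)\big);$$ (ii) if $l=4$, then $\sigma_1(G)<\sigma_1\big(K_1\vee(C_2\cup P_2\cup G_1)\big)$, where $C_2$ is the digon.
   Context: $P_l$ is the path and $C_s$ the cycle on $l$ resp. $s$ vertices; $C_2$ is the digon (two vertices joined by two parallel edges). For loopless multigraphs the degree of a vertex is the number of incident edges and the $(u,v)$ entry of the adjacency matrix $A$ is the number of edges between $u$ and $v$. $Q=A+D$, $D$ the diagonal degree matrix, and $\sigma_1$ denotes the largest eigenvalue of $Q$. $K_1\vee H$ adds one vertex adjacent to every vertex of $H$; $\cup$ is disjoint union. *)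

theory Defs
  imports "Jordan_Normal_Form.Char_Poly"
begin

text \<open>Loopless multigraphs on vertex set {0..<n}, given by an edge-multiplicity
  function w :: nat => nat => nat (w i j = number of edges between i and j).\<close>

definition multigraph :: "nat \<Rightarrow> (nat \<Rightarrow> nat \<Rightarrow> nat) \<Rightarrow> bool" where
  "multigraph n w \<longleftrightarrow> (\<forall>i j. w i j = w j i) \<and> (\<forall>i. w i i = 0)
     \<and> (\<forall>i j. n \<le> i \<or> n \<le> j \<longrightarrow> w i j = 0)"

definition mdegree :: "nat \<Rightarrow> (nat \<Rightarrow> nat \<Rightarrow> nat) \<Rightarrow> nat \<Rightarrow> nat" where
  "mdegree n w i = (\<Sum>j<n. w i j)"

definition adj_mat :: "nat \<Rightarrow> (nat \<Rightarrow> nat \<Rightarrow> nat) \<Rightarrow> real mat" where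
  "adj_mat n w = mat n n (\<lambda>(i,j). real (w i j))"

definition deg_mat :: "nat \<Rightarrow> (nat \<Rightarrow> nat \<Rightarrow> nat) \<Rightarrow> real mat" where
  "deg_mat n w = mat n n (\<lambda>(i,j). if i = j then real (mdegree n w i) else 0)"

definition signless_lap :: "nat \<Rightarrow> (nat \<Rightarrow> nat \<Rightarrow> nat) \<Rightarrow> real mat" where
  "signless_lap n w = adj_mat n w + deg_mat n w"

definition largest_eig :: "real mat \<Rightarrow> real" where
  "largest_eig M = Max {k. eigenvalue M k}"

definition sigma1 :: "nat \<Rightarrow> (nat \<Rightarrow> nat \<Rightarrow> nat) \<Rightarrow> real" where
  "sigma1 n w = largest_eig (signless_lap n w)"

definition path_g :: "nat \<Rightarrow> nat \<Rightarrow> nat \<Rightarrow> nat" where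
  "path_g l i j = (if i < l \<and> j < l \<and> (i + 1 = j \<or> j + 1 = i) then 1 else 0)"

text \<open>Cycle C_s on vertices 0..s-1 (s >= 2); for s = 2 this is the digon
  (two parallel edges between 0 and 1).\<close>
definition cycle_g :: "nat \<Rightarrow> nat \<Rightarrow> nat \<Rightarrow> nat" where
  "cycle_g s i j = (if i < s \<and> j < s \<and> i \<noteq> j then
      (if (i + 1) mod s = j then 1 else 0) + (if (j + 1) mod s = i then 1 else 0) else 0)"

definition dunion :: "nat \<Rightarrow> (nat \<Rightarrow> nat \<Rightarrow> nat) \<Rightarrow> (nat \<Rightarrow> nat \<Rightarrow> nat) \<Rightarrow> nat \<Rightarrow> nat \<Rightarrow> nat" where
  "dunion n1 w1 w2 i j = (if i < n1 \<and> j < n1 then w1 i j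
      else if n1 \<le> i \<and> n1 \<le> j then w2 (i - n1) (j - n1) else 0)"

text \<open>K_1 join H, H on n vertices: new vertex 0, vertices of H shifted by one.\<close>
definition join1 :: "nat \<Rightarrow> (nat \<Rightarrow> nat \<Rightarrow> nat) \<Rightarrow> nat \<Rightarrow> nat \<Rightarrow> nat" where
  "join1 n w i j = (if i = 0 \<and> j = 0 then 0
      else if i = 0 then (if j \<le> n then 1 else 0)
      else if j = 0 then (if i \<le> n then 1 else 0)
      else w (i - 1) (j - 1))"

end

theory Submission imports Defs "HOL-Analysis.Function_Topology" begin

definition qfM :: "(nat \<Rightarrow> nat \<Rightarrow> real) \<Rightarrow> nat \<Rightarrow> (nat \<Rightarrow> real) \<Rightarrow> real" where
  "qfM M n x = (\<Sum>i<n. \<Sum>j<n. M i j * x i * x j)"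
definition nrm :: "nat \<Rightarrow> (nat \<Rightarrow> real) \<Rightarrow> real" where
  "nrm n x = (\<Sum>i<n. (x i)^2)"
definition symM :: "(nat \<Rightarrow> nat \<Rightarrow> real) \<Rightarrow> nat \<Rightarrow> bool" where
  "symM M n \<longleftrightarrow> (\<forall>i<n. \<forall>j<n. M i j = M j i)"
definition mvM :: "(nat \<Rightarrow> nat \<Rightarrow> real) \<Rightarrow> nat \<Rightarrow> (nat \<Rightarrow> real) \<Rightarrow> nat \<Rightarrow> real" where
  "mvM M n x i = (\<Sum>j<n. M i j * x j)"

lemma qfM_mvM: "qfM M n x = (\<Sum>i<n. x i * mvM M n x i)"
  unfolding qfM_def mvM_def by (simp add: sum_distrib_left mult_ac)

lemma nrm_nonneg: "nrm n x \<ge> 0"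
  unfolding nrm_def by (simp add: sum_nonneg)

lemma nrm_zero: "nrm n x = 0 \<Longrightarrow> i < n \<Longrightarrow> x i = 0"
  unfolding nrm_def using sum_nonneg_eq_0_iff[of "{..<n}" "\<lambda>i. (x i)^2"] by auto

lemma qfM_expand:
  assumes "symM M n"
  shows "qfM M n (\<lambda>i. x i + t * z i) = qfM M n x + 2*t*(\<Sum>i<n. z i * mvM M n x i) + t^2 * qfM M n z"
proof -
  have "qfM M n (\<lambda>i. x i + t * z i) = (\<Sum>i<n. \<Sum>j<n. M i j * x i * x j + t * (M i j * z i * x j) + t * (M i j * x i * z j) + t^2 * (M i j * z i * z j))"
    unfolding qfM_def by (intro sum.cong refl) (simp add: algebra_simps power2_eq_square)
  also have "\<dots> = qfM M n x + t * (\<Sum>i<n. \<Sum>j<n. M i j * z i * x j) + t * (\<Sum>i<n. \<Sum>j<n. M i j * x i * z j) + t^2 * qfM M n z"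
    unfolding qfM_def by (simp add: sum.distrib sum_distrib_left)
  also have "(\<Sum>i<n. \<Sum>j<n. M i j * x i * z j) = (\<Sum>i<n. \<Sum>j<n. M i j * z i * x j)"
    apply (subst sum.swap)
    apply (intro sum.cong refl)
    using assms unfolding symM_def by (simp add: mult_ac)
  also have "(\<Sum>i<n. \<Sum>j<n. M i j * z i * x j) = (\<Sum>i<n. z i * mvM M n x i)"
    unfolding mvM_def by (simp add: sum_distrib_left mult_ac)
  finally show ?thesis by simp
qed

lemma nrm_expand:
  "nrm n (\<lambda>i. x i + t * z i) = nrm n x + 2*t*(\<Sum>i<n. z i * x i) + t^2 * nrm n z"
  unfolding nrm_def
  by (simp add: power2_eq_square algebra_simps sum.distrib sum_distrib_left)

lemma psd_eigen:
  assumes sym: "symM M n" and le: "\<And>y. qfM M n y \<le> \<rho> * nrm n y"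
    and eq: "qfM M n x = \<rho> * nrm n x" and i: "i < n"
  shows "mvM M n x i = \<rho> * x i"
proof -
  define z where "z i = \<rho> * x i - mvM M n x i" for i
  define N where "N = nrm n z"
  define q where "q = \<rho> * nrm n z - qfM M n z"
  have q0: "q \<ge> 0" using le[of z] unfolding q_def by simp
  have N0: "N \<ge> 0" unfolding N_def by (rule nrm_nonneg)
  have key: "0 \<le> 2*t*N + t^2*q" for t
  proof -
    have "0 \<le> \<rho> * nrm n (\<lambda>i. x i + t * z i) - qfM M n (\<lambda>i. x i + t * z i)"
      using le by simp
    also have "\<dots> = 2*t*(\<Sum>i<n. z i * (\<rho> * x i - mvM M n x i)) + t^2 * q"
      unfolding qfM_expand[OF sym] nrm_expand q_def using eq
      by (simp add: algebra_simps sum_subtractf sum_distrib_left)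
    also have "(\<Sum>i<n. z i * (\<rho> * x i - mvM M n x i)) = N"
      unfolding N_def nrm_def z_def by (simp add: power2_eq_square)
    finally show ?thesis .
  qed
  have "N = 0"
  proof (rule ccontr)
    assume "N \<noteq> 0"
    hence Np: "N > 0" using N0 by simp
    define e where "e = N / (q + 1)"
    have qp: "q + 1 > 0" using q0 by simp
    have ep: "e > 0" unfolding e_def using Np qp by simp
    have "0 \<le> 2*(-e)*N + (-e)^2*q" by (rule key)
    hence "e * (2*N) \<le> e * (e*q)" by (simp add: power2_eq_square algebra_simps)
    hence "2*N \<le> e*q" using ep by simp
    also have "e*q = N * (q/(q+1))" unfolding e_def by simp
    also have "\<dots> \<le> N * 1" using Np qp q0 by (intro mult_left_mono) auto
    finally show False using Np by simp
  qed
  hence "z i = 0" using nrm_zero i unfolding N_def by blast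
  thus ?thesis unfolding z_def by simp
qed

lemma qfM_cong: "(\<And>i. i < n \<Longrightarrow> x i = y i) \<Longrightarrow> qfM M n x = qfM M n y"
  unfolding qfM_def by (intro sum.cong refl) auto

lemma nrm_cong: "(\<And>i. i < n \<Longrightarrow> x i = y i) \<Longrightarrow> nrm n x = nrm n y"
  unfolding nrm_def by (intro sum.cong refl) auto

lemma qfM_scale: "qfM M n (\<lambda>i. c * x i) = c^2 * qfM M n x"
  unfolding qfM_def by (simp add: sum_distrib_left power2_eq_square mult_ac)

lemma nrm_scale: "nrm n (\<lambda>i. c * x i) = c^2 * nrm n x"
  unfolding nrm_def by (simp add: sum_distrib_left power2_eq_square mult_ac)

lemma rayleigh_max:
  assumes sym: "symM M n" and n: "n > 0"
  shows "\<exists>\<rho> x. (\<exists>i<n. x i \<noteq> 0) \<and> (\<forall>i<n. mvM M n x i = \<rho> * x i) \<and> (\<forall>y. qfM M n y \<le> \<rho> * nrm n y)"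
proof -
  define B where "B = {z::nat\<Rightarrow>real. \<forall>i. z i \<in> (if i < n then {-1..1} else {0})}"
  define S where "S = B \<inter> {z. nrm n z = 1}"
  have cB: "compact B"
  proof -
    have "compactin (product_topology (\<lambda>_. euclideanreal) UNIV) (PiE UNIV (\<lambda>i. if i < n then {-1..1::real} else {0}))"
      by (subst compactin_PiE) auto
    moreover have "PiE UNIV (\<lambda>i. if i < n then {-1..1::real} else {0}) = B"
      unfolding B_def by (auto simp: PiE_def Pi_def split: if_splits)
    ultimately show ?thesis by (simp add: euclidean_product_topology)
  qed
  have "closed {z::nat\<Rightarrow>real. nrm n z = 1}"
    unfolding nrm_def by (intro closed_Collect_eq continuous_intros continuous_on_product_coordinates)
  hence cS: "compact S" unfolding S_def using cB by (rule compact_Int_closed[rotated])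
  have S_ne: "S \<noteq> {}"
  proof -
    have "(\<lambda>i. if i = 0 then 1 else 0::real) \<in> S"
    proof -
      have "(\<Sum>i<n. (if i = 0 then 1 else 0::real)^2) = (\<Sum>i<n. if i = 0 then 1 else 0)"
        by (intro sum.cong refl) auto
      also have "\<dots> = 1" using n by (simp add: sum.delta)
      finally show ?thesis unfolding S_def B_def nrm_def using n by auto
    qed
    thus ?thesis by blast
  qed
  have cont: "continuous_on S (qfM M n)"
    unfolding qfM_def by (intro continuous_intros continuous_on_subset[OF continuous_on_product_coordinates subset_UNIV])
  obtain x where xS: "x \<in> S" and xmax: "\<And>y. y \<in> S \<Longrightarrow> qfM M n y \<le> qfM M n x"
    using continuous_attains_sup[OF cS S_ne cont] by blast
  define \<rho> where "\<rho> = qfM M n x"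
  have nx: "nrm n x = 1" using xS unfolding S_def by simp
  have le: "qfM M n y \<le> \<rho> * nrm n y" for y
  proof (cases "nrm n y = 0")
    case True
    hence "qfM M n y = qfM M n (\<lambda>_. 0)" using nrm_zero by (intro qfM_cong) auto
    thus ?thesis using True by (simp add: qfM_def)
  next
    case False
    hence np: "nrm n y > 0" using nrm_nonneg[of n y] by simp
    define c where "c = 1 / sqrt (nrm n y)"
    have c2: "c^2 * nrm n y = 1" unfolding c_def using np by (simp add: power_divide)
    define y' where "y' i = (if i < n then c * y i else 0)" for i
    have "nrm n y' = nrm n (\<lambda>i. c * y i)" by (rule nrm_cong) (simp add: y'_def)
    hence ny': "nrm n y' = 1" using c2 nrm_scale[of n c y] by simp
    have "y' \<in> S"
    proof -
      have "(y' i)^2 \<le> 1" if "i < n" for i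
      proof -
        have "(y' i)^2 \<le> nrm n y'" unfolding nrm_def
          using that by (intro member_le_sum) auto
        thus ?thesis using ny' by simp
      qed
      hence "\<bar>y' i\<bar> \<le> 1" if "i < n" for i using that
        by (metis abs_le_square_iff abs_one one_power2)
      thus ?thesis unfolding S_def B_def using ny' by (auto simp: y'_def abs_le_iff)
    qed
    hence "qfM M n y' \<le> \<rho>" using xmax unfolding \<rho>_def by blast
    moreover have "qfM M n y' = qfM M n (\<lambda>i. c * y i)" by (rule qfM_cong) (simp add: y'_def)
    hence "qfM M n y' = c^2 * qfM M n y" using qfM_scale[of M n c y] by simp
    ultimately have "c^2 * qfM M n y \<le> c^2 * (\<rho> * nrm n y)" using c2 by (simp add: algebra_simps)
    moreover have "c^2 > 0" using np unfolding c_def by simp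
    ultimately show ?thesis by simp
  qed
  have eig: "\<forall>i<n. mvM M n x i = \<rho> * x i"
    using psd_eigen[OF sym le] nx unfolding \<rho>_def by simp
  have "\<exists>i<n. x i \<noteq> 0"
  proof (rule ccontr)
    assume "\<not> (\<exists>i<n. x i \<noteq> 0)"
    hence "nrm n x = 0" unfolding nrm_def by simp
    thus False using nx by simp
  qed
  thus ?thesis using eig le by blast
qed

lemma mult_mat_vec_idx:
  assumes A: "A \<in> carrier_mat n n" and i: "i < n"
  shows "(A *\<^sub>v Matrix.vec n x) $ i = mvM (\<lambda>i j. A $$ (i,j)) n x i"
  using A i unfolding mvM_def by (simp add: scalar_prod_def mult_ac atLeast0LessThan)

lemma eigenvalue_iff:
  assumes A: "A \<in> carrier_mat n n"
  shows "eigenvalue A k \<longleftrightarrow> (\<exists>x. (\<exists>i<n. x i \<noteq> 0) \<and> (\<forall>i<n. mvM (\<lambda>i j. A $$ (i,j)) n x i = k * x i))"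
proof
  assume "eigenvalue A k"
  then obtain v where v: "v \<in> carrier_vec n" "v \<noteq> 0\<^sub>v n" "A *\<^sub>v v = k \<cdot>\<^sub>v v"
    using A unfolding eigenvalue_def eigenvector_def by auto
  define x where "x i = v $ i" for i
  have vv: "v = Matrix.vec n x" using v(1) unfolding x_def by auto
  have "\<exists>i<n. x i \<noteq> 0"
  proof (rule ccontr)
    assume "\<not> ?thesis"
    hence "v = 0\<^sub>v n" using v(1) unfolding x_def by auto
    thus False using v(2) by simp
  qed
  moreover have "mvM (\<lambda>i j. A $$ (i,j)) n x i = k * x i" if i: "i < n" for i
  proof -
    have "(A *\<^sub>v v) $ i = (k \<cdot>\<^sub>v v) $ i" using v(3) by simp
    thus ?thesis using mult_mat_vec_idx[OF A i, of x] i v(1) unfolding vv by simp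
  qed
  ultimately show "\<exists>x. (\<exists>i<n. x i \<noteq> 0) \<and> (\<forall>i<n. mvM (\<lambda>i j. A $$ (i,j)) n x i = k * x i)" by blast
next
  assume "\<exists>x. (\<exists>i<n. x i \<noteq> 0) \<and> (\<forall>i<n. mvM (\<lambda>i j. A $$ (i,j)) n x i = k * x i)"
  then obtain x where x: "\<exists>i<n. x i \<noteq> 0" "\<forall>i<n. mvM (\<lambda>i j. A $$ (i,j)) n x i = k * x i" by blast
  define v where "v = Matrix.vec n x"
  have "v \<noteq> 0\<^sub>v n"
  proof
    assume "v = 0\<^sub>v n"
    hence "\<forall>i<n. x i = 0" unfolding v_def by (metis index_vec index_zero_vec(1))
    thus False using x(1) by blast
  qed
  moreover have "A *\<^sub>v v = k \<cdot>\<^sub>v v"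
    by (rule eq_vecI) (use A x(2) mult_mat_vec_idx[OF A] in \<open>auto simp: v_def\<close>)
  moreover have "v \<in> carrier_vec n" unfolding v_def by simp
  ultimately show "eigenvalue A k" using A unfolding eigenvalue_def eigenvector_def by auto
qed

lemma eig_le:
  assumes "\<exists>i<n. x i \<noteq> 0" "\<forall>i<n. mvM M n x i = k * x i" "\<And>y. qfM M n y \<le> \<rho> * nrm n y"
  shows "k \<le> \<rho>"
proof -
  have "qfM M n x = k * nrm n x" using assms(2) unfolding qfM_mvM nrm_def
    by (simp add: sum_distrib_left power2_eq_square mult_ac)
  moreover have "nrm n x > 0"
  proof -
    obtain i where i: "i < n" "x i \<noteq> 0" using assms(1) by blast
    have "nrm n x \<noteq> 0" using nrm_zero[of n x i] i by auto
    thus ?thesis using nrm_nonneg[of n x] by simp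
  qed
  ultimately show ?thesis using assms(3)[of x] by simp
qed

lemma largest_eig_char:
  assumes A: "A \<in> carrier_mat n n" and sym: "symM (\<lambda>i j. A $$ (i,j)) n" and n: "n > 0"
  shows "(\<exists>x. (\<exists>i<n. x i \<noteq> 0) \<and> (\<forall>i<n. mvM (\<lambda>i j. A $$ (i,j)) n x i = largest_eig A * x i))
     \<and> (\<forall>y. qfM (\<lambda>i j. A $$ (i,j)) n y \<le> largest_eig A * nrm n y)"
proof -
  obtain \<rho> x where x: "\<exists>i<n. x i \<noteq> 0" "\<forall>i<n. mvM (\<lambda>i j. A $$ (i,j)) n x i = \<rho> * x i"
    and le: "\<forall>y. qfM (\<lambda>i j. A $$ (i,j)) n y \<le> \<rho> * nrm n y"
    using rayleigh_max[OF sym n] by blast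
  have ev: "eigenvalue A \<rho>" using eigenvalue_iff[OF A] x by blast
  have fin: "finite {k. eigenvalue A k}"
  proof -
    have "char_poly A \<noteq> 0" using degree_monic_char_poly[OF A] by auto
    hence "finite {k. poly (char_poly A) k = 0}" by (rule poly_roots_finite)
    thus ?thesis using eigenvalue_root_char_poly[OF A] by simp
  qed
  have "largest_eig A = \<rho>" unfolding largest_eig_def
  proof (rule Max_eqI[OF fin])
    fix k assume "k \<in> {k. eigenvalue A k}"
    then obtain z where "\<exists>i<n. z i \<noteq> 0" "\<forall>i<n. mvM (\<lambda>i j. A $$ (i,j)) n z i = k * z i"
      using eigenvalue_iff[OF A] by auto
    thus "k \<le> \<rho>" using eig_le le by blast
  qed (use ev in auto)
  thus ?thesis using x le by auto
qed

definition rowS :: "nat \<Rightarrow> (nat \<Rightarrow> nat \<Rightarrow> nat) \<Rightarrow> (nat \<Rightarrow> real) \<Rightarrow> nat \<Rightarrow> real" where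
  "rowS n w x i = (\<Sum>j<n. real (w i j) * x j)"
definition qfG :: "nat \<Rightarrow> (nat \<Rightarrow> nat \<Rightarrow> nat) \<Rightarrow> (nat \<Rightarrow> real) \<Rightarrow> real" where
  "qfG n w x = (\<Sum>i<n. \<Sum>j<n. real (w i j) * (x i + x j)^2)"
definition symW :: "(nat \<Rightarrow> nat \<Rightarrow> nat) \<Rightarrow> bool" where
  "symW w \<longleftrightarrow> (\<forall>i j. w i j = w j i)"

abbreviation "QM n w \<equiv> (\<lambda>i j. signless_lap n w $$ (i,j))"

lemma QM_carrier: "signless_lap n w \<in> carrier_mat n n"
  unfolding signless_lap_def adj_mat_def deg_mat_def by auto

lemma QM_entry: "i < n \<Longrightarrow> j < n \<Longrightarrow>
   QM n w i j = real (w i j) + (if i = j then rowS n w (\<lambda>_. 1) i else 0)"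
  unfolding signless_lap_def adj_mat_def deg_mat_def rowS_def mdegree_def by auto

lemma mvM_QM: "i < n \<Longrightarrow> mvM (QM n w) n x i = rowS n w (\<lambda>_. 1) i * x i + rowS n w x i"
proof -
  assume i: "i < n"
  have "mvM (QM n w) n x i = (\<Sum>j<n. real (w i j) * x j + (if i = j then rowS n w (\<lambda>_. 1) i * x j else 0))"
    unfolding mvM_def using i by (intro sum.cong refl) (auto simp: QM_entry algebra_simps)
  also have "\<dots> = rowS n w x i + rowS n w (\<lambda>_. 1) i * x i"
    using i by (simp add: sum.distrib rowS_def sum.delta)
  finally show ?thesis by simp
qed

lemma symM_QM: "symW w \<Longrightarrow> symM (QM n w) n"
  unfolding symM_def symW_def by (auto simp: QM_entry)

lemma qfM_QM: assumes "symW w" shows "qfM (QM n w) n x = qfG n w x / 2"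
proof -
  have "qfM (QM n w) n x = (\<Sum>i<n. x i * (rowS n w (\<lambda>_. 1) i * x i + rowS n w x i))"
    unfolding qfM_mvM by (intro sum.cong refl) (simp add: mvM_QM)
  also have "\<dots> = (\<Sum>i<n. \<Sum>j<n. real (w i j) * (x i)^2) + (\<Sum>i<n. \<Sum>j<n. real (w i j) * x i * x j)"
    unfolding rowS_def by (simp add: sum.distrib sum_distrib_left sum_distrib_right power2_eq_square algebra_simps)
  finally have 1: "qfM (QM n w) n x = (\<Sum>i<n. \<Sum>j<n. real (w i j) * (x i)^2) + (\<Sum>i<n. \<Sum>j<n. real (w i j) * x i * x j)" .
  have "qfG n w x = (\<Sum>i<n. \<Sum>j<n. real (w i j) * (x i)^2 + real (w i j) * (x j)^2 + 2 * (real (w i j) * x i * x j))"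
    unfolding qfG_def by (intro sum.cong refl) (simp add: power2_eq_square algebra_simps)
  also have "\<dots> = (\<Sum>i<n. \<Sum>j<n. real (w i j) * (x i)^2) + (\<Sum>i<n. \<Sum>j<n. real (w i j) * (x j)^2) + 2 * (\<Sum>i<n. \<Sum>j<n. real (w i j) * x i * x j)"
    by (simp add: sum.distrib sum_distrib_left)
  also have "(\<Sum>i<n. \<Sum>j<n. real (w i j) * (x j)^2) = (\<Sum>i<n. \<Sum>j<n. real (w i j) * (x i)^2)"
    using assms unfolding symW_def by (subst sum.swap) simp
  finally show ?thesis using 1 by simp
qed

lemma sig_char:
  assumes sym: "symW w" and n: "n > 0"
  shows "(\<exists>x. (\<exists>i<n. x i \<noteq> 0) \<and> (\<forall>i<n. rowS n w (\<lambda>_. 1) i * x i + rowS n w x i = sigma1 n w * x i))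
     \<and> (\<forall>y. qfG n w y \<le> 2 * sigma1 n w * nrm n y)"
proof -
  have "(\<exists>x. (\<exists>i<n. x i \<noteq> 0) \<and> (\<forall>i<n. mvM (QM n w) n x i = sigma1 n w * x i))
     \<and> (\<forall>y. qfM (QM n w) n y \<le> sigma1 n w * nrm n y)"
    using largest_eig_char[OF QM_carrier symM_QM[OF sym] n] unfolding sigma1_def by simp
  thus ?thesis by (auto simp: mvM_QM qfM_QM[OF sym] mult_ac)
qed

lemma graph_psd:
  assumes sym: "symW w" and le: "\<And>y. qfG n w y \<le> 2 * \<rho> * nrm n y"
    and eq: "qfG n w x = 2 * \<rho> * nrm n x" and i: "i < n"
  shows "rowS n w (\<lambda>_. 1) i * x i + rowS n w x i = \<rho> * x i"
proof -
  have "mvM (QM n w) n x i = \<rho> * x i"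
    by (rule psd_eigen[OF symM_QM[OF sym] _ _ i]) (use le eq in \<open>auto simp: qfM_QM[OF sym] mult_ac\<close>)
  thus ?thesis using mvM_QM[OF i] by simp
qed

lemma graph_eig_qf:
  assumes "symW w" "\<forall>i<n. rowS n w (\<lambda>_. 1) i * x i + rowS n w x i = \<rho> * x i"
  shows "qfG n w x = 2 * \<rho> * nrm n x"
proof -
  have "qfM (QM n w) n x = \<rho> * nrm n x" using assms(2) unfolding qfM_mvM nrm_def
    by (simp add: mvM_QM sum_distrib_left power2_eq_square mult_ac)
  thus ?thesis using qfM_QM[OF assms(1)] by simp
qed

lemma sum_split_add: "(\<Sum>i<(a::nat)+b. f i) = (\<Sum>i<a. f i) + (\<Sum>i<b. f (a+i))"
  by (induct b) (simp_all add: add_ac)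

lemma sum_if_Suc_less: "(\<Sum>i<L. if Suc i < L then g i else 0) = (\<Sum>i<L-1. g i)"
proof (cases L)
  case (Suc L')
  have "(\<Sum>i<L'. if Suc i < Suc L' then g i else 0) = (\<Sum>i<L'. g i)" by (intro sum.cong refl) auto
  thus ?thesis using Suc by simp
qed simp

lemma symW_path: "symW (path_g L)" unfolding symW_def path_g_def by auto
lemma symW_cycle: "symW (cycle_g s)" unfolding symW_def cycle_g_def by auto
lemma symW_dunion: "symW H1 \<Longrightarrow> symW H2 \<Longrightarrow> symW (dunion n1 H1 H2)"
  unfolding symW_def dunion_def by auto
lemma symW_join1: "symW H \<Longrightarrow> symW (join1 N H)"
  unfolding symW_def join1_def by auto
lemma symW_multigraph: "multigraph m w \<Longrightarrow> symW w"
  unfolding symW_def multigraph_def by auto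

lemma qfG_join1:
  "qfG (Suc N) (join1 N H) x = 2 * (\<Sum>j<N. (x 0 + x (Suc j))^2) + qfG N H (\<lambda>j. x (Suc j))"
proof -
  have A: "(\<Sum>j<Suc N. real (join1 N H 0 j) * (x 0 + x j)^2) = (\<Sum>j<N. (x 0 + x (Suc j))^2)"
    by (subst sum.lessThan_Suc_shift) (simp add: join1_def)
  have B: "(\<Sum>j<Suc N. real (join1 N H (Suc i) j) * (x (Suc i) + x j)^2)
      = (x 0 + x (Suc i))^2 + (\<Sum>j<N. real (H i j) * (x (Suc i) + x (Suc j))^2)" if "i < N" for i
    using that by (subst sum.lessThan_Suc_shift) (simp add: join1_def add.commute)
  have "qfG (Suc N) (join1 N H) x = (\<Sum>j<Suc N. real (join1 N H 0 j) * (x 0 + x j)^2)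
     + (\<Sum>i<N. (\<Sum>j<Suc N. real (join1 N H (Suc i) j) * (x (Suc i) + x j)^2))"
    unfolding qfG_def by (rule sum.lessThan_Suc_shift)
  also have "\<dots> = (\<Sum>j<N. (x 0 + x (Suc j))^2) + (\<Sum>i<N. (x 0 + x (Suc i))^2 + (\<Sum>j<N. real (H i j) * (x (Suc i) + x (Suc j))^2))"
    using A B by (simp del: sum.lessThan_Suc)
  finally show ?thesis unfolding qfG_def by (simp add: sum.distrib)
qed

lemma qfG_dunion:
  "qfG (n1+n2) (dunion n1 H1 H2) x = qfG n1 H1 x + qfG n2 H2 (\<lambda>j. x (n1+j))"
  unfolding qfG_def
  by (simp add: sum_split_add dunion_def sum.distrib)

lemma qfG_path:
  "qfG L (path_g L) z = 2 * (\<Sum>t<L-1. (z t + z (Suc t))^2)"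
proof -
  define F where "F i j = (z i + z j)^2" for i j
  have "qfG L (path_g L) z = (\<Sum>i<L. \<Sum>j<L. (if j = Suc i then F i j else 0) + (if i = Suc j then F i j else 0))"
    unfolding qfG_def F_def by (intro sum.cong refl) (auto simp: path_g_def)
  also have "\<dots> = (\<Sum>i<L. \<Sum>j<L. (if j = Suc i then F i j else 0)) + (\<Sum>j<L. \<Sum>i<L. (if i = Suc j then F i j else 0))"
    by (simp add: sum.distrib sum.swap[of _ "{..<L}" "{..<L}"])
  also have "(\<Sum>i<L. \<Sum>j<L. (if j = Suc i then F i j else 0)) = (\<Sum>t<L-1. F t (Suc t))"
    by (simp add: sum.delta'  sum_if_Suc_less)
  also have "(\<Sum>j<L. \<Sum>i<L. (if i = Suc j then F i j else 0)) = (\<Sum>t<L-1. F t (Suc t))"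
    by (simp add: sum.delta' sum_if_Suc_less F_def add.commute)
  finally show ?thesis unfolding F_def by simp
qed

lemma qfG_cycle:
  assumes s: "2 \<le> s"
  shows "qfG s (cycle_g s) z = 2 * (\<Sum>t<s. (z t + z (Suc t mod s))^2)"
proof -
  define F where "F i j = (z i + z j)^2" for i j
  have ne: "Suc i mod s \<noteq> i" if "i < s" for i
  proof (cases "Suc i < s")
    case True thus ?thesis by simp
  next
    case False
    hence "Suc i = s" using that by simp
    thus ?thesis using s by auto
  qed
  have "qfG s (cycle_g s) z = (\<Sum>i<s. \<Sum>j<s. (if j = Suc i mod s then F i j else 0) + (if i = Suc j mod s then F i j else 0))"
    unfolding qfG_def F_def
  proof (intro sum.cong refl)
    fix i j assume "i \<in> {..<s}" "j \<in> {..<s}"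
    thus "real (cycle_g s i j) * (z i + z j)^2 = (if j = Suc i mod s then (z i + z j)^2 else 0) + (if i = Suc j mod s then (z i + z j)^2 else 0)"
      using ne[of i] ne[of j] by (auto simp: cycle_g_def algebra_simps)
  qed
  also have "\<dots> = (\<Sum>i<s. \<Sum>j<s. (if j = Suc i mod s then F i j else 0)) + (\<Sum>j<s. \<Sum>i<s. (if i = Suc j mod s then F i j else 0))"
    by (simp add: sum.distrib sum.swap[of _ "{..<s}" "{..<s}"])
  also have "(\<Sum>i<s. \<Sum>j<s. (if j = Suc i mod s then F i j else 0)) = (\<Sum>t<s. F t (Suc t mod s))"
    using s by (intro sum.cong refl) (simp add: sum.delta')
  also have "(\<Sum>j<s. \<Sum>i<s. (if i = Suc j mod s then F i j else 0)) = (\<Sum>t<s. F t (Suc t mod s))"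
    using s by (intro sum.cong refl) (simp add: sum.delta' F_def add.commute)
  finally show ?thesis unfolding F_def by simp
qed

lemma rowS_join1_0: "rowS (Suc N) (join1 N H) x 0 = (\<Sum>j<N. x (Suc j))"
  unfolding rowS_def by (subst sum.lessThan_Suc_shift) (simp add: join1_def)

lemma rowS_join1_Suc: "k < N \<Longrightarrow> rowS (Suc N) (join1 N H) x (Suc k) = x 0 + rowS N H (\<lambda>j. x (Suc j)) k"
  unfolding rowS_def by (subst sum.lessThan_Suc_shift) (simp add: join1_def)

lemma rowS_dunion1: "k < n1 \<Longrightarrow> rowS (n1+n2) (dunion n1 H1 H2) x k = rowS n1 H1 x k"
  unfolding rowS_def by (simp add: sum_split_add dunion_def)

lemma rowS_dunion2: "rowS (n1+n2) (dunion n1 H1 H2) x (n1+k) = rowS n2 H2 (\<lambda>j. x (n1+j)) k"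
  unfolding rowS_def by (simp add: sum_split_add dunion_def)

lemma rowS_path: "k < L \<Longrightarrow> rowS L (path_g L) z k = (if 0 < k then z (k-1) else 0) + (if Suc k < L then z (Suc k) else 0)"
proof -
  assume k: "k < L"
  have "rowS L (path_g L) z k = (\<Sum>j<L. (if j = Suc k then z j else 0) + (if k = Suc j then z j else 0))"
    unfolding rowS_def using k by (intro sum.cong refl) (auto simp: path_g_def)
  also have "\<dots> = (if Suc k < L then z (Suc k) else 0) + (\<Sum>j<L. (if j = k - 1 \<and> 0 < k then z j else 0))"
    by (simp add: sum.distrib sum.delta') (intro sum.cong refl, auto)
  also have "(\<Sum>j<L. (if j = k - 1 \<and> 0 < k then z j else 0)) = (if 0 < k then z (k-1) else 0)"
    using k by (cases "0 < k") (simp_all add: sum.delta')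
  finally show ?thesis by simp
qed

lemma sum_perm:
  assumes "\<forall>i<n. \<sigma> i < n \<and> \<sigma>' i < n \<and> \<sigma> (\<sigma>' i) = i \<and> \<sigma>' (\<sigma> i) = i"
  shows "(\<Sum>i<n. f (\<sigma> i)) = (\<Sum>i<n. f i)"
  by (rule sum.reindex_bij_witness[of _ \<sigma>' \<sigma>]) (use assms in auto)

lemma qfG_perm:
  assumes p: "\<forall>i<n. \<sigma> i < n \<and> \<sigma>' i < n \<and> \<sigma> (\<sigma>' i) = i \<and> \<sigma>' (\<sigma> i) = i"
    and w: "\<forall>i<n. \<forall>j<n. w (\<sigma> i) (\<sigma> j) = w i j"
  shows "qfG n w (\<lambda>i. x (\<sigma> i)) = qfG n w x"
proof -
  have "qfG n w (\<lambda>i. x (\<sigma> i)) = (\<Sum>i<n. \<Sum>j<n. real (w (\<sigma> i) (\<sigma> j)) * (x (\<sigma> i) + x (\<sigma> j))^2)"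
    unfolding qfG_def using w by simp
  also have "\<dots> = (\<Sum>i<n. \<Sum>j<n. real (w (\<sigma> i) j) * (x (\<sigma> i) + x j)^2)"
    by (intro sum.cong refl sum_perm[OF p])
  also have "\<dots> = qfG n w x" unfolding qfG_def by (rule sum_perm[OF p])
  finally show ?thesis .
qed

lemma nrm_perm:
  assumes p: "\<forall>i<n. \<sigma> i < n \<and> \<sigma>' i < n \<and> \<sigma> (\<sigma>' i) = i \<and> \<sigma>' (\<sigma> i) = i"
  shows "nrm n (\<lambda>i. x (\<sigma> i)) = nrm n x"
  unfolding nrm_def by (rule sum_perm[OF p])

definition refl_l :: "nat \<Rightarrow> nat \<Rightarrow> nat" where
  "refl_l l v = (if 1 \<le> v \<and> v \<le> l then Suc l - v else v)"

lemma refl_l_perm: "\<forall>i<Suc (l+m). refl_l l i < Suc (l+m) \<and> refl_l l i < Suc (l+m) \<and> refl_l l (refl_l l i) = i \<and> refl_l l (refl_l l i) = i"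
  unfolding refl_l_def by auto

lemma src_auto:
  "join1 (l+m) (dunion l (path_g l) w1) (refl_l l u) (refl_l l v) = join1 (l+m) (dunion l (path_g l) w1) u v"
proof -
  have pa: "path_g l (l - u) (l - v) = path_g l (u - 1) (v - 1)" if "1 \<le> u" "u \<le> l" "1 \<le> v" "v \<le> l"
    using that unfolding path_g_def by auto
  show ?thesis
  proof (cases "u = 0")
    case True thus ?thesis by (cases "v = 0") (auto simp: refl_l_def join1_def)
  next
    case u: False
    show ?thesis
    proof (cases "v = 0")
      case True thus ?thesis using u by (auto simp: refl_l_def join1_def)
    next
      case v: False
      have "refl_l l u \<noteq> 0" "refl_l l v \<noteq> 0" using u v by (auto simp: refl_l_def)
      hence "join1 (l+m) (dunion l (path_g l) w1) (refl_l l u) (refl_l l v) = dunion l (path_g l) w1 (refl_l l u - 1) (refl_l l v - 1)"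
        "join1 (l+m) (dunion l (path_g l) w1) u v = dunion l (path_g l) w1 (u - 1) (v - 1)"
        using u v by (auto simp: join1_def)
      moreover have "dunion l (path_g l) w1 (refl_l l u - 1) (refl_l l v - 1) = dunion l (path_g l) w1 (u - 1) (v - 1)"
      proof (cases "u \<le> l"; cases "v \<le> l")
        assume "u \<le> l" "v \<le> l"
        moreover have "u - 1 < l" "v - 1 < l" "Suc l - u - 1 = l - u" "Suc l - v - 1 = l - v" "l - u < l" "l - v < l"
          using u v \<open>u \<le> l\<close> \<open>v \<le> l\<close> by auto
        ultimately show ?thesis using u v pa by (simp add: refl_l_def dunion_def)
      qed (use u v in \<open>auto simp: refl_l_def dunion_def\<close>)
      ultimately show ?thesis by simp
    qed
  qed
qed

lemma rowS_add: "rowS n w (\<lambda>i. f i + g i) k = rowS n w f k + rowS n w g k"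
  unfolding rowS_def by (simp add: algebra_simps sum.distrib)

lemma src_row:
  assumes k: "k < l"
  shows "rowS (Suc (l+m)) (join1 (l+m) (dunion l (path_g l) w1)) x (Suc k)
     = x 0 + (if 0 < k then x k else 0) + (if Suc k < l then x (Suc (Suc k)) else 0)"
proof -
  have "rowS (Suc (l+m)) (join1 (l+m) (dunion l (path_g l) w1)) x (Suc k)
      = x 0 + rowS (l+m) (dunion l (path_g l) w1) (\<lambda>j. x (Suc j)) k"
    using k by (intro rowS_join1_Suc) simp
  also have "rowS (l+m) (dunion l (path_g l) w1) (\<lambda>j. x (Suc j)) k = rowS l (path_g l) (\<lambda>j. x (Suc j)) k"
    using k by (rule rowS_dunion1)
  also have "\<dots> = (if 0 < k then x k else 0) + (if Suc k < l then x (Suc (Suc k)) else 0)"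
    using k by (simp add: rowS_path)
  finally show ?thesis by simp
qed

lemma src_row0:
  "rowS (Suc (l+m)) (join1 (l+m) H) x 0 = (\<Sum>j<l+m. x (Suc j))"
  by (rule rowS_join1_0)

lemma qfG_abs_ge: "qfG n w x \<le> qfG n w (\<lambda>i. \<bar>x i\<bar>)"
  unfolding qfG_def
proof (intro sum_mono mult_left_mono)
  fix i j
  have "\<bar>x i + x j\<bar> \<le> \<bar>x i\<bar> + \<bar>x j\<bar>" by (rule abs_triangle_ineq)
  hence "\<bar>x i + x j\<bar>^2 \<le> (\<bar>x i\<bar> + \<bar>x j\<bar>)^2" by (intro power_mono) auto
  thus "(x i + x j)^2 \<le> (\<bar>x i\<bar> + \<bar>x j\<bar>)^2" by simp
qed simp

lemma nrm_abs: "nrm n (\<lambda>i. \<bar>x i\<bar>) = nrm n x"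
  unfolding nrm_def by simp

lemma src_vec:
  assumes l: "l \<ge> 2" and mg: "multigraph m w1"
  defines "W \<equiv> join1 (l+m) (dunion l (path_g l) w1)" and "n \<equiv> Suc (l+m)"
  obtains y where "\<forall>v<n. y v \<ge> 0" "y 0 > 0"
    "\<forall>i<n. rowS n W (\<lambda>_. 1) i * y i + rowS n W y i = sigma1 n W * y i"
    "\<forall>v. 1 \<le> v \<and> v \<le> l \<longrightarrow> y (Suc l - v) = y v"
    "\<forall>j. 1 \<le> j \<and> 2*j < l \<longrightarrow> y j < y (Suc j)"
proof -
  define \<rho> where "\<rho> = sigma1 n W"
  have sym: "symW W" unfolding W_def
    by (intro symW_join1 symW_dunion symW_path symW_multigraph[OF mg])
  obtain x where xnz: "\<exists>i<n. x i \<noteq> 0" and xe: "\<forall>i<n. rowS n W (\<lambda>_. 1) i * x i + rowS n W x i = \<rho> * x i"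
    and le: "\<And>y. qfG n W y \<le> 2 * \<rho> * nrm n y"
    using sig_char[OF sym, of n] unfolding n_def \<rho>_def by auto
  have qx: "qfG n W x = 2 * \<rho> * nrm n x" by (rule graph_eig_qf[OF sym xe])
  define x1 where "x1 i = \<bar>x i\<bar>" for i
  have q1: "qfG n W x1 = 2 * \<rho> * nrm n x1"
    using qfG_abs_ge[of n W x] le[of x1] qx nrm_abs[of n x] unfolding x1_def by (simp add: x1_def)
  have e1: "\<forall>i<n. rowS n W (\<lambda>_. 1) i * x1 i + rowS n W x1 i = \<rho> * x1 i"
    using graph_psd[OF sym le q1] by blast
  define x2 where "x2 i = x1 (refl_l l i)" for i
  have perm: "\<forall>i<n. refl_l l i < n \<and> refl_l l i < n \<and> refl_l l (refl_l l i) = i \<and> refl_l l (refl_l l i) = i"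
    using refl_l_perm unfolding n_def by blast
  have wperm: "\<forall>i<n. \<forall>j<n. W (refl_l l i) (refl_l l j) = W i j" unfolding W_def by (simp add: src_auto)
  have q2: "qfG n W x2 = 2 * \<rho> * nrm n x2"
    unfolding x2_def qfG_perm[OF perm wperm] nrm_perm[OF perm] by (rule q1)
  have e2: "\<forall>i<n. rowS n W (\<lambda>_. 1) i * x2 i + rowS n W x2 i = \<rho> * x2 i"
    using graph_psd[OF sym le q2] by blast
  define y where "y i = x1 i + x2 i" for i
  have ye: "\<forall>i<n. rowS n W (\<lambda>_. 1) i * y i + rowS n W y i = \<rho> * y i"
  proof (intro allI impI)
    fix i assume i: "i < n"
    have "rowS n W y i = rowS n W x1 i + rowS n W x2 i" unfolding y_def by (rule rowS_add)
    thus "rowS n W (\<lambda>_. 1) i * y i + rowS n W y i = \<rho> * y i"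
      using e1 e2 i unfolding y_def by (simp add: algebra_simps)
  qed
  have y0: "\<forall>v. y v \<ge> 0" unfolding y_def x2_def x1_def by simp
  have ynz: "\<exists>i<n. y i \<noteq> 0"
  proof -
    obtain i where i: "i < n" "x i \<noteq> 0" using xnz by blast
    hence "y i > 0" unfolding y_def x2_def x1_def by (simp add: add_pos_nonneg)
    thus ?thesis using i by auto
  qed
  have ysym: "\<forall>v. 1 \<le> v \<and> v \<le> l \<longrightarrow> y (Suc l - v) = y v"
  proof (intro allI impI)
    fix v assume v: "1 \<le> v \<and> v \<le> l"
    have "refl_l l v = Suc l - v" "refl_l l (Suc l - v) = v" using v unfolding refl_l_def by auto
    thus "y (Suc l - v) = y v" unfolding y_def x2_def by (metis add.commute)
  qed
  define a where "a = y 0"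
  have eq0: "real (l+m) * y 0 + (\<Sum>j<l+m. y (Suc j)) = \<rho> * y 0"
  proof -
    have "rowS n W (\<lambda>_. 1) 0 = real (l+m)" unfolding n_def W_def src_row0 by simp
    moreover have "rowS n W y 0 = (\<Sum>j<l+m. y (Suc j))" unfolding n_def W_def src_row0 by simp
    ultimately show ?thesis using ye unfolding n_def by force
  qed
  have apos: "a > 0"
  proof (rule ccontr)
    assume "\<not> a > 0"
    hence a0: "y 0 = 0" using y0 unfolding a_def by (metis order_le_less)
    hence "(\<Sum>j<l+m. y (Suc j)) = 0" using eq0 by simp
    hence "\<forall>j<l+m. y (Suc j) = 0" using y0 by (simp add: sum_nonneg_eq_0_iff)
    hence "\<forall>i<n. y i = 0" using a0 unfolding n_def by (metis less_Suc_eq_0_disj add_Suc_right less_Suc_eq_le not_less_eq_eq) 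
    thus False using ynz by blast
  qed
  have eqk: "(1 + ((if 0 < k then 1 else 0) + (if Suc k < l then 1 else 0))) * y (Suc k) + (a
      + ((if 0 < k then y k else 0) + (if Suc k < l then y (Suc (Suc k)) else 0))) = \<rho> * y (Suc k)" if k: "k < l" for k
  proof -
    have R1: "rowS n W (\<lambda>_. 1) (Suc k) = 1 + ((if 0 < k then 1 else 0) + (if Suc k < l then 1 else 0))"
      unfolding n_def W_def using src_row[OF k, of m w1 "\<lambda>_. 1"] by simp
    have R2: "rowS n W y (Suc k) = a + ((if 0 < k then y k else 0) + (if Suc k < l then y (Suc (Suc k)) else 0))"
      unfolding n_def W_def a_def using src_row[OF k, of m w1 y] by simp
    have "Suc k < n" using k unfolding n_def by simp
    hence E: "rowS n W (\<lambda>_. 1) (Suc k) * y (Suc k) + rowS n W y (Suc k) = \<rho> * y (Suc k)" using ye by blast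
    show ?thesis using E by (simp only: R1 R2)
  qed
  have e_1: "(\<rho> - 2) * y 1 = a + y 2"
    using eqk[of 0] l by (simp add: algebra_simps numeral_2_eq_2)
  have e_l: "(\<rho> - 2) * y l = a + y (l - 1)"
  proof -
    have "l - 1 < l" "0 < l - 1" "Suc (l - 1) = l" using l by auto
    thus ?thesis using eqk[of "l - 1"] by (simp add: algebra_simps)
  qed
  have e_i: "(\<rho> - 3) * y v = a + y (v - 1) + y (Suc v)" if "2 \<le> v" "v < l" for v
  proof -
    have "v - 1 < l" "0 < v - 1" "Suc (v - 1) = v" using that by auto
    thus ?thesis using eqk[of "v - 1"] that(2) by (simp add: algebra_simps)
  qed
  define M where "M = Max (y ` {1..l})"
  have finY: "finite (y ` {1..l})" "y ` {1..l} \<noteq> {}" using l by auto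
  have Mge: "y v \<le> M" if "1 \<le> v" "v \<le> l" for v
    unfolding M_def using that finY by (intro Max_ge) auto
  obtain v0 where v0: "1 \<le> v0" "v0 \<le> l" "y v0 = M"
    using Max_in[OF finY] unfolding M_def by auto
  define j0 where "j0 = (LEAST v. 1 \<le> v \<and> v \<le> l \<and> y v = M)"
  have j0: "1 \<le> j0" "j0 \<le> l" "y j0 = M"
  proof -
    have "1 \<le> v0 \<and> v0 \<le> l \<and> y v0 = M" using v0 by simp
    from LeastI[of "\<lambda>v. 1 \<le> v \<and> v \<le> l \<and> y v = M", OF this]
    show "1 \<le> j0" "j0 \<le> l" "y j0 = M" unfolding j0_def by auto
  qed
  have j0min: "y v \<noteq> M" if "1 \<le> v" "v < j0" for v
    using not_less_Least[of v "\<lambda>v. 1 \<le> v \<and> v \<le> l \<and> y v = M"] that j0(2) unfolding j0_def by auto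
  have M0: "M \<ge> 0" using y0 v0 by auto
  have keyM: "(\<rho> - 5) * M < a"
  proof -
    consider "j0 = 1" | "j0 = l" | "2 \<le> j0 \<and> j0 < l" using j0 by linarith
    thus ?thesis
    proof cases
      case 1
      have "y 2 \<le> M" using l by (intro Mge) auto
      hence "(\<rho> - 2) * M \<le> a + M" using e_1 j0 1 by simp
      moreover have "(\<rho> - 5) * M = (\<rho> - 2) * M - 3 * M" by (simp add: algebra_simps)
      ultimately show ?thesis using M0 apos by (cases "M = 0") auto
    next
      case 2
      have "y (l - 1) \<le> M" using l by (intro Mge) auto
      hence "(\<rho> - 2) * M \<le> a + M" using e_l j0 2 by simp
      moreover have "(\<rho> - 5) * M = (\<rho> - 2) * M - 3 * M" by (simp add: algebra_simps)
      ultimately show ?thesis using M0 apos by (cases "M = 0") auto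
    next
      case 3
      have "y (j0 - 1) \<le> M" using 3 by (intro Mge) auto
      moreover have "y (j0 - 1) \<noteq> M" using 3 by (intro j0min) auto
      ultimately have "y (j0 - 1) < M" by simp
      moreover have "y (Suc j0) \<le> M" using 3 by (intro Mge) auto
      ultimately have "(\<rho> - 3) * M < a + 2 * M" using e_i[of j0] 3 j0 by simp
      moreover have "(\<rho> - 5) * M = (\<rho> - 3) * M - 2 * M" by (simp add: algebra_simps)
      ultimately show ?thesis by simp
    qed
  qed
  have Ev: "(\<rho> - 5) * y v < a" if "1 \<le> v" "v \<le> l" for v
  proof (cases "\<rho> \<ge> 5")
    case True
    hence "(\<rho> - 5) * y v \<le> (\<rho> - 5) * M" using Mge[OF that] by (intro mult_left_mono) auto
    thus ?thesis using keyM by simp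
  next
    case False
    hence "(\<rho> - 5) * y v \<le> 0" using y0 by (intro mult_nonpos_nonneg) auto
    thus ?thesis using apos by simp
  qed
  define D where "D j = y (Suc j) - y j" for j
  have Dstep: "D v < D (v - 1)" if "2 \<le> v" "v < l" for v
  proof -
    have "D v - D (v - 1) = y (Suc v) - 2 * y v + y (v - 1)"
      unfolding D_def using that by (simp add: Suc_diff_le)
    also have "\<dots> = (\<rho> - 5) * y v - a" using e_i[OF that] by (simp add: algebra_simps)
    finally show ?thesis using Ev[of v] that by simp
  qed
  have Ddec: "\<forall>j. 1 \<le> j \<and> j < k \<and> k < l \<longrightarrow> D k < D j" for k
  proof (induction k)
    case 0 thus ?case by simp
  next
    case (Suc k)
    show ?case
    proof (intro allI impI)
      fix j assume j: "1 \<le> j \<and> j < Suc k \<and> Suc k < l"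
      have st: "D (Suc k) < D k" using Dstep[of "Suc k"] j by simp
      show "D (Suc k) < D j"
      proof (cases "j = k")
        case True thus ?thesis using st by simp
      next
        case False
        hence "D k < D j" using Suc.IH j by simp
        thus ?thesis using st by simp
      qed
    qed
  qed
  have mono: "\<forall>j. 1 \<le> j \<and> 2*j < l \<longrightarrow> y j < y (Suc j)"
  proof (intro allI impI)
    fix j assume j: "1 \<le> j \<and> 2*j < l"
    have "D (l - j) < D j" using Ddec[of "l - j"] j by auto
    moreover have "y (Suc (l - j)) = y j"
    proof -
      have "Suc (l - j) \<le> l" using j by linarith
      thus ?thesis using ysym[rule_format, of "Suc (l - j)"] j by (simp add: Suc_diff_le)
    qed
    moreover have "y (l - j) = y (Suc j)"
    proof -
      have "1 \<le> l - j" using j by linarith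
      thus ?thesis using ysym[rule_format, of "l - j"] j by (simp add: Suc_diff_le)
    qed
    ultimately show "y j < y (Suc j)" unfolding D_def by simp
  qed
  show ?thesis
    by (rule that[of y]) (use y0 apos ye ysym mono in \<open>auto simp: a_def \<rho>_def\<close>)
qed

lemma cyc_path_id:
  fixes y z :: "nat \<Rightarrow> real"
  assumes i: "i = Suc a" and s: "s = Suc (Suc b)"
    and hz1: "\<forall>t<s. z (Suc t) = y (Suc t + i)"
    and hz2: "\<forall>t<i. z (Suc (s + t)) = y (Suc t)"
    and hz3: "\<forall>t\<ge>i. z (Suc (s + t)) = y (Suc (s + t))"
  shows "(\<Sum>t<s. (z (Suc t) + z (Suc (Suc t mod s)))^2) + (\<Sum>t<i + c. (z (Suc (s + t)) + z (Suc (s + Suc t)))^2)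
    = (\<Sum>t<a + (1 + (Suc b + (1 + c))). (y (Suc t) + y (Suc (Suc t)))^2)
      + (y (s + i) + y (Suc i))^2 + (y i + y (Suc (s + i)))^2 - (y i + y (Suc i))^2 - (y (s + i) + y (Suc (s + i)))^2"
proof -
  define P where "P t = (y (Suc t) + y (Suc (Suc t)))^2" for t
  have C: "(\<Sum>t<s. (z (Suc t) + z (Suc (Suc t mod s)))^2) = (\<Sum>t<Suc b. P (i + t)) + (y (s + i) + y (Suc i))^2"
  proof -
    have "(\<Sum>t<s. (z (Suc t) + z (Suc (Suc t mod s)))^2) = (\<Sum>t<Suc b. (z (Suc t) + z (Suc (Suc t mod s)))^2) + (z (Suc (Suc b)) + z (Suc (Suc (Suc b) mod s)))^2"
      unfolding s by simp
    also have "(\<Sum>t<Suc b. (z (Suc t) + z (Suc (Suc t mod s)))^2) = (\<Sum>t<Suc b. P (i + t))"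
    proof (intro sum.cong refl)
      fix t assume t: "t \<in> {..<Suc b}"
      hence "Suc t mod s = Suc t" "t < s" "Suc t < s" using s by auto
      thus "(z (Suc t) + z (Suc (Suc t mod s)))^2 = P (i + t)"
        using hz1 unfolding P_def by (simp add: add.commute)
    qed
    also have "z (Suc (Suc b)) = y (s + i)" using hz1 s by auto
    also have "z (Suc (Suc (Suc b) mod s)) = y (Suc i)" using hz1 s by simp
    finally show ?thesis by simp
  qed
  have Pth: "(\<Sum>t<i + c. (z (Suc (s + t)) + z (Suc (s + Suc t)))^2) = (\<Sum>t<a. P t) + (y i + y (Suc (s + i)))^2 + (\<Sum>t<c. P (s + i + t))"
  proof -
    have "(\<Sum>t<i + c. (z (Suc (s + t)) + z (Suc (s + Suc t)))^2) = (\<Sum>t<a. (z (Suc (s + t)) + z (Suc (s + Suc t)))^2) + (z (Suc (s + a)) + z (Suc (s + Suc a)))^2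
        + (\<Sum>t<c. (z (Suc (s + (i + t))) + z (Suc (s + Suc (i + t))))^2)"
      unfolding sum_split_add i by simp
    also have "(\<Sum>t<a. (z (Suc (s + t)) + z (Suc (s + Suc t)))^2) = (\<Sum>t<a. P t)"
      using hz2 i unfolding P_def by (intro sum.cong refl) auto
    also have "(\<Sum>t<c. (z (Suc (s + (i + t))) + z (Suc (s + Suc (i + t))))^2) = (\<Sum>t<c. P (s + i + t))"
    proof (intro sum.cong refl)
      fix t assume "t \<in> {..<c}"
      have "z (Suc (s + (i + t))) = y (Suc (s + (i + t)))" using hz3 by simp
      moreover have "z (Suc (s + Suc (i + t))) = y (Suc (s + Suc (i + t)))" using hz3[rule_format, of "Suc (i + t)"] by simp
      ultimately show "(z (Suc (s + (i + t))) + z (Suc (s + Suc (i + t))))^2 = P (s + i + t)"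
        unfolding P_def by (simp add: add_ac)
    qed
    also have "z (Suc (s + a)) = y i" using hz2 i by auto
    also have "z (Suc (s + Suc a)) = y (Suc (s + i))" using hz3 i by auto
    finally show ?thesis by simp
  qed
  have S: "(\<Sum>t<a + (1 + (Suc b + (1 + c))). P t) = (\<Sum>t<a. P t) + (y i + y (Suc i))^2 + (\<Sum>t<Suc b. P (i + t))
      + (y (s + i) + y (Suc (s + i)))^2 + (\<Sum>t<c. P (s + i + t))"
  proof -
    have "(\<Sum>t<a + (1 + (Suc b + (1 + c))). P t) = (\<Sum>t<a. P t) + P a + (\<Sum>t<Suc b. P (Suc a + t)) + P (a + 1 + Suc b) + (\<Sum>t<c. P (a + 1 + Suc b + 1 + t))"
      unfolding sum_split_add by (simp add: add_ac)
    moreover have "P a = (y i + y (Suc i))^2" unfolding P_def i by simp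
    moreover have "P (a + 1 + Suc b) = (y (s + i) + y (Suc (s + i)))^2" unfolding P_def i s by (simp add: add.commute)
    moreover have "(\<Sum>t<c. P (a + 1 + Suc b + 1 + t)) = (\<Sum>t<c. P (s + i + t))" unfolding i s by (simp add: add_ac)
    ultimately show ?thesis unfolding i by simp
  qed
  show ?thesis unfolding C Pth S[unfolded P_def] P_def by simp
qed

lemma tgt_qf:
  assumes s: "2 \<le> s" "s \<le> l"
  shows "qfG (Suc (l+m)) (join1 (l+m) (dunion s (cycle_g s) (dunion (l-s) (path_g (l-s)) w1))) z
   = 2 * (\<Sum>j<l+m. (z 0 + z (Suc j))^2) + 2 * (\<Sum>t<s. (z (Suc t) + z (Suc (Suc t mod s)))^2)
     + 2 * (\<Sum>t<l-s-1. (z (Suc (s + t)) + z (Suc (s + Suc t)))^2) + qfG m w1 (\<lambda>j. z (Suc (s + ((l - s) + j))))"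
proof -
  have e: "l + m = s + ((l-s)+m)" using s by simp
  have "qfG (l+m) (dunion s (cycle_g s) (dunion (l-s) (path_g (l-s)) w1)) (\<lambda>j. z (Suc j))
     = qfG (s + ((l-s)+m)) (dunion s (cycle_g s) (dunion (l-s) (path_g (l-s)) w1)) (\<lambda>j. z (Suc j))"
    by (simp only: e)
  also have "\<dots> = qfG s (cycle_g s) (\<lambda>j. z (Suc j)) + qfG ((l-s)+m) (dunion (l-s) (path_g (l-s)) w1) (\<lambda>j. z (Suc (s + j)))"
    by (rule qfG_dunion)
  also have "qfG ((l-s)+m) (dunion (l-s) (path_g (l-s)) w1) (\<lambda>j. z (Suc (s + j)))
     = qfG (l-s) (path_g (l-s)) (\<lambda>j. z (Suc (s + j))) + qfG m w1 (\<lambda>j. z (Suc (s + ((l - s) + j))))"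
    by (rule qfG_dunion)
  finally show ?thesis
    unfolding qfG_join1 by (simp add: qfG_cycle[OF s(1)] qfG_path)
qed

lemma src_qf:
  "qfG (Suc (l+m)) (join1 (l+m) (dunion l (path_g l) w1)) y
   = 2 * (\<Sum>j<l+m. (y 0 + y (Suc j))^2) + 2 * (\<Sum>t<l-1. (y (Suc t) + y (Suc (Suc t)))^2)
     + qfG m w1 (\<lambda>j. y (Suc (l + j)))"
  unfolding qfG_join1 qfG_dunion qfG_path by simp

lemma tgt_row:
  assumes s: "s \<le> l" and k: "k < l - s"
  shows "rowS (Suc (l+m)) (join1 (l+m) (dunion s (cycle_g s) (dunion (l-s) (path_g (l-s)) w1))) x (Suc (s + k))
     = x 0 + (if 0 < k then x (Suc (s + (k - 1))) else 0) + (if Suc k < l - s then x (Suc (s + Suc k)) else 0)"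
proof -
  have e: "l + m = s + ((l-s)+m)" using s by simp
  have "rowS (Suc (l+m)) (join1 (l+m) (dunion s (cycle_g s) (dunion (l-s) (path_g (l-s)) w1))) x (Suc (s + k))
     = x 0 + rowS (l+m) (dunion s (cycle_g s) (dunion (l-s) (path_g (l-s)) w1)) (\<lambda>j. x (Suc j)) (s + k)"
    using s k by (intro rowS_join1_Suc) simp
  also have "rowS (l+m) (dunion s (cycle_g s) (dunion (l-s) (path_g (l-s)) w1)) (\<lambda>j. x (Suc j)) (s + k)
     = rowS (s + ((l-s)+m)) (dunion s (cycle_g s) (dunion (l-s) (path_g (l-s)) w1)) (\<lambda>j. x (Suc j)) (s + k)"
    by (simp only: e)
  also have "\<dots> = rowS ((l-s)+m) (dunion (l-s) (path_g (l-s)) w1) (\<lambda>j. x (Suc (s + j))) k"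
    by (rule rowS_dunion2)
  also have "\<dots> = rowS (l-s) (path_g (l-s)) (\<lambda>j. x (Suc (s + j))) k"
    using k by (rule rowS_dunion1)
  also have "\<dots> = (if 0 < k then x (Suc (s + (k - 1))) else 0) + (if Suc k < l - s then x (Suc (s + Suc k)) else 0)"
    using k by (simp add: rowS_path)
  finally show ?thesis by simp
qed

lemma main_ineq:
  assumes l: "4 \<le> l" and s: "2 \<le> s" "s \<le> l - 2" and mg: "multigraph m w1"
  shows "sigma1 (Suc (l+m)) (join1 (l+m) (dunion l (path_g l) w1))
       < sigma1 (Suc (l+m)) (join1 (l+m) (dunion s (cycle_g s) (dunion (l-s) (path_g (l-s)) w1)))"
proof -
  define W where "W = join1 (l+m) (dunion l (path_g l) w1)"
  define W' where "W' = join1 (l+m) (dunion s (cycle_g s) (dunion (l-s) (path_g (l-s)) w1))"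
  define n where "n = Suc (l+m)"
  define \<rho> where "\<rho> = sigma1 n W"
  define \<rho>' where "\<rho>' = sigma1 n W'"
  obtain y where ypos: "\<forall>v<n. y v \<ge> 0" and y0: "y 0 > 0"
    and ye: "\<forall>i<n. rowS n W (\<lambda>_. 1) i * y i + rowS n W y i = \<rho> * y i"
    and ysym: "\<forall>v. 1 \<le> v \<and> v \<le> l \<longrightarrow> y (Suc l - v) = y v"
    and mono: "\<forall>j. 1 \<le> j \<and> 2*j < l \<longrightarrow> y j < y (Suc j)"
    using src_vec[of l m w1] l mg unfolding W_def n_def \<rho>_def by auto
  have sym: "symW W" unfolding W_def
    by (intro symW_join1 symW_dunion symW_path symW_multigraph[OF mg])
  have sym': "symW W'" unfolding W'_def
    by (intro symW_join1 symW_dunion symW_path symW_cycle symW_multigraph[OF mg])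
  have le': "\<And>z. qfG n W' z \<le> 2 * \<rho>' * nrm n z"
    using sig_char[OF sym', of n] unfolding n_def \<rho>'_def by auto
  have qy: "qfG n W y = 2 * \<rho> * nrm n y" by (rule graph_eig_qf[OF sym ye])
  define i where "i = (l - s + 1) div 2"
  have par: "(l - s = 2 * i) \<or> (l - s + 1 = 2 * i \<and> 2 \<le> i)" using s l unfolding i_def by presburger
  have i1: "1 \<le> i" and isl: "i + s + 1 \<le> l" using par s l by auto
  define \<pi> where "\<pi> v = (if 1 \<le> v \<and> v \<le> s then v + i else if s < v \<and> v \<le> s + i then v - s else v)" for v
  define \<pi>' where "\<pi>' v = (if 1 \<le> v \<and> v \<le> i then v + s else if i < v \<and> v \<le> i + s then v - i else v)" for v
  have perm: "\<forall>v<n. \<pi> v < n \<and> \<pi>' v < n \<and> \<pi> (\<pi>' v) = v \<and> \<pi>' (\<pi> v) = v"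
    using isl unfolding \<pi>_def \<pi>'_def n_def by auto
  define z where "z v = y (\<pi> v)" for v
  have nz: "nrm n z = nrm n y" unfolding z_def by (rule nrm_perm[OF perm])
  have z0: "z 0 = y 0" unfolding z_def \<pi>_def by simp
  have apex: "(\<Sum>j<l+m. (z 0 + z (Suc j))^2) = (\<Sum>j<l+m. (y 0 + y (Suc j))^2)"
  proof -
    have "(\<Sum>v<n. (y 0 + z v)^2) = (\<Sum>v<n. (y 0 + y v)^2)"
      unfolding z_def by (rule sum_perm[OF perm])
    thus ?thesis unfolding n_def z0 by (simp only: sum.lessThan_Suc_shift z0)
  qed
  have g1: "qfG m w1 (\<lambda>j. z (Suc (s + ((l - s) + j)))) = qfG m w1 (\<lambda>j. y (Suc (l + j)))"
  proof -
    have "z (Suc (s + ((l - s) + j))) = y (Suc (l + j))" for j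
      using s isl unfolding z_def \<pi>_def by auto
    thus ?thesis by simp
  qed
  define a where "a = i - 1"
  define b where "b = s - 2"
  define c where "c = l - s - 1 - i"
  have ia: "i = Suc a" and sb: "s = Suc (Suc b)" using i1 s unfolding a_def b_def by auto
  have hz1: "\<forall>t<s. z (Suc t) = y (Suc t + i)" unfolding z_def \<pi>_def by auto
  have hz2: "\<forall>t<i. z (Suc (s + t)) = y (Suc t)" unfolding z_def \<pi>_def by auto
  have hz3: "\<forall>t\<ge>i. z (Suc (s + t)) = y (Suc (s + t))" unfolding z_def \<pi>_def by auto
  note cp = cyc_path_id[OF ia sb hz1 hz2 hz3, of c]
  have lc1: "l - s - 1 = i + c" unfolding c_def using isl by simp
  have lc2: "l - 1 = a + (1 + (Suc b + (1 + c)))" unfolding c_def a_def b_def using isl i1 s by simp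
  define \<Delta> where "\<Delta> = (y (s + i) + y (Suc i))^2 + (y i + y (Suc (s + i)))^2 - (y i + y (Suc i))^2 - (y (s + i) + y (Suc (s + i)))^2"
  have sl: "s \<le> l" using s l by simp
  have T: "qfG n W' z = 2 * (\<Sum>j<l+m. (z 0 + z (Suc j))^2) + 2 * (\<Sum>t<s. (z (Suc t) + z (Suc (Suc t mod s)))^2)
     + 2 * (\<Sum>t<l-s-1. (z (Suc (s + t)) + z (Suc (s + Suc t)))^2) + qfG m w1 (\<lambda>j. z (Suc (s + ((l - s) + j))))"
    unfolding n_def W'_def by (rule tgt_qf[OF s(1) sl])
  have S: "qfG n W y = 2 * (\<Sum>j<l+m. (y 0 + y (Suc j))^2) + 2 * (\<Sum>t<l-1. (y (Suc t) + y (Suc (Suc t)))^2)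
     + qfG m w1 (\<lambda>j. y (Suc (l + j)))"
    unfolding n_def W_def by (rule src_qf)
  have cp': "(\<Sum>t<s. (z (Suc t) + z (Suc (Suc t mod s)))^2) + (\<Sum>t<l-s-1. (z (Suc (s + t)) + z (Suc (s + Suc t)))^2)
      = (\<Sum>t<l-1. (y (Suc t) + y (Suc (Suc t)))^2) + \<Delta>"
    using cp unfolding lc1 lc2 \<Delta>_def by linarith
  have qz: "qfG n W' z = qfG n W y + 2 * \<Delta>"
    using T S apex g1 cp' by linarith
  have \<Delta>0: "\<Delta> \<ge> 0"
  proof -
    have D: "\<Delta> = 2 * (y (Suc i) - y (Suc (s + i))) * (y (s + i) - y i)"
      unfolding \<Delta>_def by (simp add: power2_eq_square algebra_simps)
    from par show ?thesis
    proof
      assume ev: "l - s = 2 * i"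
      have "y (Suc l - i) = y i" using ysym[rule_format, of i] i1 isl by auto
      moreover have "Suc l - i = Suc (s + i)" using ev isl sl by arith
      moreover have "y (Suc l - Suc i) = y (Suc i)" using ysym[rule_format, of "Suc i"] i1 isl by auto
      moreover have "Suc l - Suc i = s + i" using ev isl sl by arith
      ultimately have "\<Delta> = 2 * (y (Suc i) - y i)^2" unfolding D by (simp add: power2_eq_square)
      thus ?thesis by simp
    next
      assume od: "l - s + 1 = 2 * i \<and> 2 \<le> i"
      have "y (Suc l - i) = y i" using ysym[rule_format, of i] i1 isl by auto
      moreover have "Suc l - i = s + i" using od isl sl by arith
      ultimately have "\<Delta> = 0" unfolding D by simp
      thus ?thesis by simp
    qed
  qed
  have ny: "nrm n y > 0"
  proof -
    have "(y 0)^2 \<le> nrm n y" unfolding nrm_def n_def by (intro member_le_sum) auto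
    moreover have "(y 0)^2 > 0" using y0 by simp
    ultimately show ?thesis by linarith
  qed
  show ?thesis
  proof (rule ccontr)
    assume "\<not> ?thesis"
    hence rr: "\<rho>' \<le> \<rho>" unfolding \<rho>_def \<rho>'_def W_def W'_def n_def by simp
    have "2 * \<rho> * nrm n z \<le> qfG n W' z" using qz qy nz \<Delta>0 by simp
    moreover have "qfG n W' z \<le> 2 * \<rho>' * nrm n z" by (rule le')
    ultimately have "2 * \<rho> * nrm n z \<le> 2 * \<rho>' * nrm n z" by simp
    hence "\<rho> \<le> \<rho>'" using ny nz by simp
    hence rr': "\<rho>' = \<rho>" using rr by simp
    have qz': "qfG n W' z = 2 * \<rho>' * nrm n z"
      using qz qy nz \<Delta>0 le'[of z] rr' by simp
    define k where "k = i - 1"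
    have k: "k < l - s" "Suc (s + k) < n" "Suc k = i" using isl i1 unfolding k_def n_def by auto
    have ez: "rowS n W' (\<lambda>_. 1) (Suc (s + k)) * z (Suc (s + k)) + rowS n W' z (Suc (s + k)) = \<rho>' * z (Suc (s + k))"
      by (rule graph_psd[OF sym' le' qz' k(2)])
    have Rz1: "rowS n W' (\<lambda>_. 1) (Suc (s + k)) = 1 + (if 0 < k then 1 else 0) + 1"
      unfolding n_def W'_def using tgt_row[OF _ k(1), of m w1 "\<lambda>_. 1"] s l isl k by simp
    have Rz2: "rowS n W' z (Suc (s + k)) = y 0 + (if 0 < k then y k else 0) + y (Suc (s + i))"
    proof -
      have "z (Suc (s + (k - 1))) = y k" if "0 < k" using that k unfolding z_def \<pi>_def by auto
      moreover have "z (Suc (s + Suc k)) = y (Suc (s + i))" using k unfolding z_def \<pi>_def by auto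
      moreover have "Suc k < l - s" using isl k by simp
      ultimately show ?thesis
        unfolding n_def W'_def using tgt_row[OF _ k(1), of m w1 z] s l z0 by auto
    qed
    have zk: "z (Suc (s + k)) = y i" using k unfolding z_def \<pi>_def by auto
    have ey: "rowS n W (\<lambda>_. 1) i * y i + rowS n W y i = \<rho> * y i" using ye isl unfolding n_def by simp
    have Ry1: "rowS n W (\<lambda>_. 1) i = 1 + (if 0 < k then 1 else 0) + 1"
      unfolding n_def W_def using src_row[of k l m w1 "\<lambda>_. 1"] k isl by simp
    have Ry2: "rowS n W y i = y 0 + (if 0 < k then y k else 0) + y (Suc i)"
      unfolding n_def W_def using src_row[of k l m w1 y] k isl by simp
    have yy: "y (Suc i) = y (Suc (s + i))"
      using ez ey unfolding Rz1 Rz2 Ry1 Ry2 zk rr' by simp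
    from par show False
    proof
      assume ev: "l - s = 2 * i"
      have "y (Suc l - i) = y i" using ysym[rule_format, of i] i1 isl by auto
      moreover have "Suc l - i = Suc (s + i)" using ev isl sl by arith
      ultimately have "y (Suc i) = y i" using yy by simp
      moreover have "y i < y (Suc i)" using mono i1 ev s by auto
      ultimately show False by simp
    next
      assume od: "l - s + 1 = 2 * i \<and> 2 \<le> i"
      have "y (Suc l - Suc (s + i)) = y (Suc (s + i))" using ysym[rule_format, of "Suc (s + i)"] isl by auto
      moreover have "Suc l - Suc (s + i) = i - 1" using od isl sl by arith
      ultimately have "y (Suc i) = y (i - 1)" using yy by simp
      moreover have "y (i - 1) < y (Suc (i - 1))"
      proof -
        have "1 \<le> i - 1 \<and> 2*(i-1) < l" using od s sl by arith
        thus ?thesis using mono by blast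
      qed
      moreover have "y i < y (Suc i)"
      proof -
        have "1 \<le> i \<and> 2*i < l" using od s sl by arith
        thus ?thesis using mono by blast
      qed
      moreover have "Suc (i - 1) = i" using od by simp
      ultimately show False by simp
    qed
  qed
qed

theorem lemma3p7:
  fixes l m :: nat and w1 :: "nat \<Rightarrow> nat \<Rightarrow> nat"
  assumes "l \<ge> 4" and "multigraph m w1"
  shows "(l \<ge> 5 \<longrightarrow> (\<forall>s. 3 \<le> s \<and> s \<le> l - 2 \<longrightarrow>
            sigma1 (1 + l + m) (join1 (l + m) (dunion l (path_g l) w1))
          < sigma1 (1 + l + m) (join1 (l + m) (dunion s (cycle_g s) (dunion (l - s) (path_g (l - s)) w1)))))
       \<and> (l = 4 \<longrightarrow>
            sigma1 (1 + l + m) (join1 (l + m) (dunion l (path_g l) w1))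
          < sigma1 (1 + l + m) (join1 (l + m) (dunion 2 (cycle_g 2) (dunion 2 (path_g 2) w1))))"
proof -
  have n: "1 + l + m = Suc (l + m)" by simp
  have A: "\<forall>s. 3 \<le> s \<and> s \<le> l - 2 \<longrightarrow>
            sigma1 (Suc (l + m)) (join1 (l + m) (dunion l (path_g l) w1))
          < sigma1 (Suc (l + m)) (join1 (l + m) (dunion s (cycle_g s) (dunion (l - s) (path_g (l - s)) w1)))"
    using main_ineq[OF assms(1) _ _ assms(2)] by auto
  have B: "l = 4 \<longrightarrow>
            sigma1 (Suc (l + m)) (join1 (l + m) (dunion l (path_g l) w1))
          < sigma1 (Suc (l + m)) (join1 (l + m) (dunion 2 (cycle_g 2) (dunion 2 (path_g 2) w1)))"
  proof
    assume l4: "l = 4"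
    have "sigma1 (Suc (l + m)) (join1 (l + m) (dunion l (path_g l) w1))
          < sigma1 (Suc (l + m)) (join1 (l + m) (dunion 2 (cycle_g 2) (dunion (l - 2) (path_g (l - 2)) w1)))"
      using main_ineq[OF assms(1) _ _ assms(2), of 2] l4 by simp
    thus "sigma1 (Suc (l + m)) (join1 (l + m) (dunion l (path_g l) w1))
          < sigma1 (Suc (l + m)) (join1 (l + m) (dunion 2 (cycle_g 2) (dunion 2 (path_g 2) w1)))"
      using l4 by simp
  qed
  show ?thesis unfolding n using A B by blast
qed

end
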